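(* Suppose we have $n\ge3$ agents with additive, identical, normalized valuations, provided with a prediction of accuracy $\eta<1-\min\left\{\frac{1}{2(n-1+2a)},\frac{1-a^2}{4+(2n-3)a}\right\}$ for some given $a\in(0,1]$; that is, the allowed error between the prediction and the true valuation is $1-\eta>\min\left\{\frac{1}{2(n-1+2a)},\frac{1-a^2}{4+(2n-3)a}\right\}$. Then there is no online algorithm that guarantees an $a$-EFX allocation for all instances with error at most $1-\eta$, even when $T'=T=2n-1$ and the prediction and the true valuation are $3$-value functions.
   Context: Online fair division with predictions and identical valuations: agents $[n]$; goods $g_1,\dots,g_T$ arrive one per time step; all agents share a true additive normalized valuation $v$ ($v(g_t)\ge0$, $\sum_{t\in[T]}v(g_t)=1$, $v(S)=\sum_{g\in S}v(g)$), and before any arrival the algorithm receives a prediction $p=(p(g_1),\dots,p(g_{T'}))$ (an additive normalized valuation over $T'$ predicted goods) and the accuracy level. Error $\frac12\sum_{t=1}^{\max\{T,T'\}}|p(g_t)-v(g_t)|$ (missing entries set to $0$); accuracy $\eta$ means the error is at most $1-\eta$. At time $t$, $v(g_t)$ is revealed and $g_t$ must be irrevocably allocated. For $S\ne\emptyset$, $\bar S=S\setminus\{g\}$ with $g\in\arg\max_{g'\in S}v(S\setminus\{g'\})$, $\bar\emptyset=\emptyset$. An allocation is $a$-EFX if $v(A_i)\ge a\cdot v(\bar A_j)$ for all $i,j$. A function is $k$-value if it takes at most $k$ distinct values. *)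

theory Defs
  imports Complex_Main
begin

(* A valuation over goods g_1..g_m is represented as a list of length m:
   entry t (0-based) is the value of good g_(t+1). *)

definition normalized_val :: "real list \<Rightarrow> bool" where
  "normalized_val xs \<longleftrightarrow> (\<forall>x\<in>set xs. 0 \<le> x) \<and> sum_list xs = 1"

definition k_value :: "nat \<Rightarrow> real list \<Rightarrow> bool" where
  "k_value k xs \<longleftrightarrow> card (set xs) \<le> k"

definition val_at :: "real list \<Rightarrow> nat \<Rightarrow> real" where
  "val_at xs t = (if t < length xs then xs ! t else 0)"

definition pred_error :: "real list \<Rightarrow> real list \<Rightarrow> real" where
  "pred_error p v = (1/2) * (\<Sum>t<max (length v) (length p). \<bar>val_at p t - val_at v t\<bar>)"

definition bundle_val :: "real list \<Rightarrow> nat set \<Rightarrow> real" where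
  "bundle_val v S = (\<Sum>t\<in>S. val_at v t)"

definition bar_val :: "real list \<Rightarrow> nat set \<Rightarrow> real" where
  "bar_val v S = (if S = {} then 0 else Max ((\<lambda>g. bundle_val v (S - {g})) ` S))"

definition a_EFX :: "nat \<Rightarrow> real \<Rightarrow> real list \<Rightarrow> (nat \<Rightarrow> nat set) \<Rightarrow> bool" where
  "a_EFX n a v A \<longleftrightarrow> (\<forall>i<n. \<forall>j<n. bundle_val v (A i) \<ge> a * bar_val v (A j))"

(* A deterministic online algorithm: given the prediction p and the values
   v(g_1),...,v(g_t) revealed so far, it returns the agent receiving g_t.
   The induced allocation: *)
definition online_alloc :: "(real list \<Rightarrow> real list \<Rightarrow> nat) \<Rightarrow> real list \<Rightarrow> real list \<Rightarrow> nat \<Rightarrow> nat set" where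
  "online_alloc alg p v i = {t. t < length v \<and> alg p (take (Suc t) v) = i}"

end

theory Submission imports Defs begin

lemma s1: "(\<Sum>t<(L::nat). (if t < j then (0::real) else c)) = real (L - j) * c"
  by (induction L) (auto simp: Suc_diff_le algebra_simps)
lemma s2: "(\<Sum>t<(L::nat). (if t < j then (c::real) else 0)) = real (min L j) * c"
  by (induction L) (auto simp: algebra_simps min_def)

lemma val_at_map: "val_at (map f [0..<L]) t = (if t < L then f t else 0)"
  by (simp add: val_at_def)

lemma sum_list_map_upt: "sum_list (map f [0..<L]) = (\<Sum>t<L. f t)"
  by (simp add: interv_sum_list_conv_sum_set_nat atLeast0LessThan)

lemma bar_ge:
  assumes "finite S" "i \<in> S" "j \<in> S" "i \<noteq> j" "\<And>t. val_at v t \<ge> 0"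
  shows "val_at v i \<le> bar_val v S"
proof -
  have "val_at v i \<le> bundle_val v (S - {j})"
    unfolding bundle_val_def
    using assms by (intro member_le_sum) auto
  also have "\<dots> \<le> Max ((\<lambda>g. bundle_val v (S - {g})) ` S)"
    using assms by (intro Max_ge) auto
  finally show ?thesis using assms by (auto simp: bar_val_def)
qed

lemma bundle_le:
  assumes "finite U" "S \<subseteq> U" "\<And>t. val_at v t \<ge> 0"
  shows "bundle_val v S \<le> (\<Sum>t\<in>U. val_at v t)"
  unfolding bundle_val_def using assms by (intro sum_mono2) auto

lemma alloc_finite: "finite (online_alloc alg p v i)"
  unfolding online_alloc_def by auto

lemma not_efx:
  assumes "i < n" "j < n" "bundle_val v (A i) < a * bar_val v (A j)"
  shows "\<not> a_EFX n a v A"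
  using assms unfolding a_EFX_def by force


theorem theorem4p9:
  fixes n :: nat and a \<eta> :: real
  assumes "n \<ge> 3" and "0 < a" and "a \<le> 1"
    and "\<eta> < 1 - min (1 / (2 * (real n - 1 + 2 * a))) ((1 - a\<^sup>2) / (4 + (2 * real n - 3) * a))"
  shows "\<forall>alg :: real list \<Rightarrow> real list \<Rightarrow> nat. (\<forall>p h. alg p h < n) \<longrightarrow>
           (\<exists>p v. length p = 2 * n - 1 \<and> length v = 2 * n - 1 \<and>
                  normalized_val p \<and> normalized_val v \<and>
                  k_value 3 p \<and> k_value 3 v \<and>
                  pred_error p v \<le> 1 - \<eta> \<and>
                  \<not> a_EFX n a v (online_alloc alg p v))"
proof (intro allI impI)
  fix alg :: "real list \<Rightarrow> real list \<Rightarrow> nat"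
  assume bnd: "\<forall>p h. alg p h < n"
  obtain k where kn: "n = k + 3" using assms(1) by (metis add.commute le_Suc_ex)
  define r where "r = 1 - \<eta>"
  have Xpos: "0 < 1 / (2 * (real n - 1 + 2 * a))" using assms by auto
  have "1 - a\<^sup>2 \<ge> 0" using assms by (simp add: power_le_one)
  hence Ynn: "0 \<le> (1 - a\<^sup>2) / (4 + (2 * real n - 3) * a)" using assms by auto
  have rpos: "r > 0" using assms(4) Xpos Ynn unfolding r_def by linarith
  define \<delta> where "\<delta> = min r (a/4)"
  have dpos: "\<delta> > 0" "\<delta> \<le> r" "\<delta> \<le> a/4" using rpos assms unfolding \<delta>_def by auto
  define N where "N = real n"
  have N3: "N \<ge> 3" using assms(1) unfolding N_def by simp
  define \<epsilon> where "\<epsilon> = \<delta> * a / (4 * N)"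
  have epos: "\<epsilon> > 0" using dpos assms N3 unfolding \<epsilon>_def by auto
  have Ne: "N * \<epsilon> = a * \<delta> / 4" using N3 unfolding \<epsilon>_def by (auto simp: field_simps)
  define m where "m = \<delta> / 2"
  define bC where "bC = 1 - real (2*k+3) * \<epsilon> - m"
  define bA where "bA = 1 - real (k+2) * \<epsilon>"
  have Nk: "N = real k + 3" unfolding N_def kn by simp
  have ad: "a * \<delta> \<le> \<delta>" using dpos assms by (simp add: mult_left_le_one_le)
  have c1: "real (2*k+3) * \<epsilon> < a * m"
  proof -
    have "real (2*k+3) * \<epsilon> = 2 * (N * \<epsilon>) - 3 * \<epsilon>" using Nk by (simp add: algebra_simps)
    also have "\<dots> < a * m" proof - have "a * m = 2 * (N * \<epsilon>)" using Ne unfolding m_def by (simp add: algebra_simps) then show ?thesis using epos by linarith qed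
    finally show ?thesis .
  qed
  have bCge: "bC \<ge> 1 - a/4"
  proof -
    have "real (2*k+3) * \<epsilon> \<le> 2 * (N * \<epsilon>)" using Nk epos by (simp add: algebra_simps)
    then show ?thesis using Ne ad dpos unfolding bC_def m_def by linarith
  qed
  have bCpos: "bC > 0" using bCge assms by linarith
  have c2: "1 - bC < a * bC"
  proof -
    have h1: "(1 + a) * bC \<ge> (1 + a) * (1 - a/4)" using bCge assms by (intro mult_left_mono) auto
    have aa: "a * a \<le> a" using assms by (simp add: mult_left_le_one_le)
    have "(1 + a) * (1 - a/4) = 1 + 3*a/4 - a*a/4" by (simp add: field_simps)
    hence h2: "(1 + a) * (1 - a/4) > 1" using aa assms by linarith
    have "(1 + a) * bC = bC + a * bC" by (simp add: algebra_simps)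
    then show ?thesis using h1 h2 by linarith
  qed
  have bAC: "bA - bC = real (k+1) * \<epsilon> + m" unfolding bA_def bC_def by (simp add: algebra_simps)
  have bCA: "bC \<le> bA"
  proof -
    have "0 \<le> real (k+1) * \<epsilon>" using epos by simp
    then show ?thesis using bAC dpos unfolding m_def by linarith
  qed
  have bApos: "bA \<ge> 0"
  proof -
    have "real (k+2) * \<epsilon> \<le> N * \<epsilon>" using Nk epos by (simp add: algebra_simps)
    then show ?thesis using Ne ad dpos assms(3) unfolding bA_def by linarith
  qed
  have errb: "real (k+2) * \<epsilon> + m \<le> r"
  proof -
    have "real (k+2) * \<epsilon> \<le> N * \<epsilon>" using Nk epos by (simp add: algebra_simps)
    then show ?thesis using Ne ad dpos unfolding m_def by linarith
  qed
  define L where "L = 2*k+5"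
  have Ln: "2 * n - 1 = L" unfolding L_def kn by simp
  define fC where "fC t = (if t = k+3 then m else if t = 2*k+4 then bC else \<epsilon>)" for t
  define fA where "fA t = (if t < k+2 then \<epsilon> else if t = 2*k+4 then bA else 0)" for t
  define vC where "vC = map fC [0..<L]"
  define vA where "vA = map fA [0..<L]"
  have fCnn: "fC t \<ge> 0" for t using epos bCpos dpos unfolding fC_def m_def by auto
  have fAnn: "fA t \<ge> 0" for t using epos bApos unfolding fA_def by auto
  have vCnn: "val_at vC t \<ge> 0" for t unfolding vC_def val_at_map using fCnn by auto
  have vAnn: "val_at vA t \<ge> 0" for t unfolding vA_def val_at_map using fAnn by auto
  have sumC: "(\<Sum>t<L. fC t) = 1"
  proof -
    have "fC t = \<epsilon> + (if t = k+3 then m - \<epsilon> else 0) + (if t = 2*k+4 then bC - \<epsilon> else 0)" for t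
      unfolding fC_def by auto
    hence "(\<Sum>t<L. fC t) = (\<Sum>t<L. \<epsilon> + (if t = k+3 then m - \<epsilon> else 0) + (if t = 2*k+4 then bC - \<epsilon> else 0))"
      by simp
    also have "\<dots> = real L * \<epsilon> + (m - \<epsilon>) + (bC - \<epsilon>)"
      by (simp add: sum.distrib L_def)
    also have "\<dots> = 1" unfolding bC_def L_def by (simp add: algebra_simps)
    finally show ?thesis .
  qed
  have sumA: "(\<Sum>t<L. fA t) = 1"
  proof -
    have "fA t = (if t < k+2 then \<epsilon> else 0) + (if t = 2*k+4 then bA else 0)" for t
      unfolding fA_def by auto
    hence "(\<Sum>t<L. fA t) = (\<Sum>t<L. (if t < k+2 then \<epsilon> else 0) + (if t = 2*k+4 then bA else 0))"
      by simp
    also have "\<dots> = real (min L (k+2)) * \<epsilon> + bA"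
      by (simp only: sum.distrib s2) (simp add: L_def)
    also have "\<dots> = 1" unfolding bA_def L_def by simp
    finally show ?thesis .
  qed
  have normC: "normalized_val vC"
    unfolding normalized_val_def vC_def sum_list_map_upt using sumC fCnn by auto
  have normA: "normalized_val vA"
    unfolding normalized_val_def vA_def sum_list_map_upt using sumA fAnn by auto
  have kC: "k_value 3 vC"
  proof -
    have "set vC \<subseteq> {\<epsilon>, m, bC}" unfolding vC_def fC_def by auto
    hence "card (set vC) \<le> card {\<epsilon>, m, bC}" by (intro card_mono) auto
    also have "\<dots> \<le> 3" by (auto simp: card_insert_if)
    finally show ?thesis unfolding k_value_def .
  qed
  have kA: "k_value 3 vA"
  proof -
    have "set vA \<subseteq> {\<epsilon>, bA, 0}" unfolding vA_def fA_def by auto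
    hence "card (set vA) \<le> card {\<epsilon>, bA, 0}" by (intro card_mono) auto
    also have "\<dots> \<le> 3" by (auto simp: card_insert_if)
    finally show ?thesis unfolding k_value_def .
  qed
  have lenC: "length vC = 2 * n - 1" and lenA: "length vA = 2 * n - 1"
    unfolding vC_def vA_def Ln by simp_all
  have errCC: "pred_error vC vC \<le> 1 - \<eta>"
    unfolding pred_error_def r_def[symmetric] using rpos by simp
  have errCA: "pred_error vC vA \<le> 1 - \<eta>"
  proof -
    have "(\<Sum>t<max (length vA) (length vC). \<bar>val_at vC t - val_at vA t\<bar>) = (\<Sum>t<L. \<bar>fC t - fA t\<bar>)"
      unfolding vA_def vC_def val_at_map by simp
    also have "\<dots> \<le> (\<Sum>t<L. (if t < k+2 then 0 else \<epsilon>) + (if t = k+3 then m else 0) + (if t = 2*k+4 then bA - bC else 0))"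
    proof (intro sum_mono)
      fix t assume "t \<in> {..<L}"
      show "\<bar>fC t - fA t\<bar> \<le> (if t < k+2 then 0 else \<epsilon>) + (if t = k+3 then m else 0) + (if t = 2*k+4 then bA - bC else 0)"
        using epos dpos bAC bCA unfolding fC_def fA_def m_def by (auto simp: abs_if)
    qed
    also have "\<dots> = real (L - (k+2)) * \<epsilon> + m + (bA - bC)"
      by (simp only: sum.distrib s1) (simp add: L_def)
    also have "\<dots> = 2 * (real (k+2) * \<epsilon> + m)" unfolding bAC L_def by (simp add: algebra_simps)
    finally show ?thesis unfolding pred_error_def r_def[symmetric] using errb by simp
  qed
  define F where "F t = alg vC (take (Suc t) vC)" for t
  have takeC: "take (Suc t) vC = map fC [0..<Suc t]" if "t < L" for t
    unfolding vC_def using that by (simp add: take_map take_upt)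
  have takeA: "take (Suc t) vA = take (Suc t) vC" if "t < k+2" for t
  proof -
    have "take (Suc t) vA = map fA [0..<Suc t]" unfolding vA_def using that by (simp add: take_map take_upt L_def)
    also have "\<dots> = map fC [0..<Suc t]" using that unfolding fA_def fC_def by (intro map_cong) auto
    finally show ?thesis using takeC[of t] that L_def by simp
  qed
  show "\<exists>p v. length p = 2 * n - 1 \<and> length v = 2 * n - 1 \<and>
                  normalized_val p \<and> normalized_val v \<and>
                  k_value 3 p \<and> k_value 3 v \<and>
                  pred_error p v \<le> 1 - \<eta> \<and>
                  \<not> a_EFX n a v (online_alloc alg p v)"
  proof (cases "inj_on F {..<k+2}")
    case False
    then obtain i j where ij: "i < k+2" "j < k+2" "i \<noteq> j" "F i = F j"
      unfolding inj_on_def by auto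
    define I where "I = F ` {..<k+2}"
    have finI: "finite I" unfolding I_def by simp
    have cardI: "card I < k+2"
    proof -
      have "card I \<le> card {..<k+2}" unfolding I_def by (rule card_image_le) auto
      moreover have "card I \<noteq> k+2" using False unfolding I_def
        by (metis card_lessThan finite_lessThan inj_on_iff_eq_card)
      ultimately show ?thesis by simp
    qed
    have Isub: "I \<subseteq> {..<n}" unfolding I_def F_def using bnd by auto
    have cD: "card ({..<n} - I) \<ge> 2"
      using card_Diff_subset[OF finI Isub] cardI kn by simp
    define h where "h = alg vC (take (Suc (2*k+4)) vA)"
    have "\<exists>e. e \<in> {..<n} - I \<and> e \<noteq> h"
    proof (rule ccontr)
      assume "\<not> ?thesis"
      hence "{..<n} - I \<subseteq> {h}" by auto
      hence "card ({..<n} - I) \<le> card {h}" by (intro card_mono) auto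
      thus False using cD by simp
    qed
    then obtain e where e: "e < n" "e \<notin> I" "e \<noteq> h" by auto
    define A where "A = online_alloc alg vC vA"
    have memA: "t \<in> A x \<longleftrightarrow> t < L \<and> alg vC (take (Suc t) vA) = x" for t x
      unfolding A_def online_alloc_def vA_def by simp
    have b0: "bundle_val vA (A e) = 0"
      unfolding bundle_val_def
    proof (rule sum.neutral, rule ballI)
      fix t assume t: "t \<in> A e"
      hence tL: "t < L" and te: "alg vC (take (Suc t) vA) = e" using memA by auto
      have "\<not> t < k+2"
      proof
        assume "t < k+2"
        hence "F t = e" using te takeA[of t] unfolding F_def by simp
        thus False using e(2) \<open>t < k+2\<close> unfolding I_def by auto
      qed
      moreover have "t \<noteq> 2*k+4" using te e(3) unfolding h_def by auto
      ultimately show "val_at vA t = 0" unfolding vA_def val_at_map fA_def using tL by auto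
    qed
    define d where "d = F i"
    have dn: "d < n" unfolding d_def F_def using bnd by auto
    have iA: "i \<in> A d" using ij takeA[of i] unfolding memA d_def F_def L_def by simp
    have jA: "j \<in> A d" using ij takeA[of j] unfolding memA d_def F_def L_def by simp
    have "val_at vA i \<le> bar_val vA (A d)"
      using bar_ge[OF _ iA jA ij(3) vAnn] unfolding A_def by (simp add: alloc_finite)
    moreover have "val_at vA i = \<epsilon>" unfolding vA_def val_at_map fA_def using ij L_def by simp
    ultimately have "bundle_val vA (A e) < a * bar_val vA (A d)"
      using b0 epos assms(2) by (metis mult_pos_pos order_less_le_trans mult_left_mono less_imp_le)
    hence "\<not> a_EFX n a vA A" by (rule not_efx[OF e(1) dn])
    then show ?thesis unfolding A_def using lenC lenA normC normA kC kA errCA by blast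
  next
    case True
    define I where "I = F ` {..<k+2}"
    have finI: "finite I" unfolding I_def by simp
    have cardI: "card I = k+2" using True unfolding I_def by (simp add: card_image)
    have Isub: "I \<subseteq> {..<n}" unfolding I_def F_def using bnd by auto
    have "card ({..<n} - I) = 1"
      using card_Diff_subset[OF finI Isub] cardI kn by simp
    then obtain E where EE: "{..<n} - I = {E}" by (rule card_1_singletonE)
    have inI: "\<exists>s<k+2. F s = x" if "x < n" "x \<noteq> E" for x
      using EE that unfolding I_def by blast
    define A where "A = online_alloc alg vC vC"
    have memA: "t \<in> A x \<longleftrightarrow> t < L \<and> alg vC (take (Suc t) vC) = x" for t x
      unfolding A_def online_alloc_def vC_def by simp
    have finA: "finite (A x)" for x unfolding A_def by (simp add: alloc_finite)
    have memF: "s \<in> A (F s)" if "s < k+2" for s using that unfolding memA F_def L_def by simp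
    define g where "g = alg vC (take (Suc (k+3)) vC)"
    define h where "h = alg vC (take (Suc (2*k+4)) vC)"
    have gA: "k+3 \<in> A g" unfolding memA g_def L_def by simp
    have hA: "2*k+4 \<in> A h" unfolding memA h_def L_def by simp
    have gn: "g < n" and hn: "h < n" unfolding g_def h_def using bnd by auto
    have vm: "val_at vC (k+3) = m" and vb: "val_at vC (2*k+4) = bC"
      unfolding vC_def val_at_map fC_def L_def by auto
    have tot: "(\<Sum>t\<in>{..<L}. val_at vC t) = 1"
      using sumC unfolding vC_def val_at_map by simp
    have sub1: "A x \<subseteq> {..<L}" for x using memA by auto
    show ?thesis
    proof (cases "g = E")
      case True
      obtain s where s: "s \<in> A h" "s \<noteq> 2*k+4"
      proof (cases "h = E")
        case True
        then show ?thesis using that[of "k+3"] gA \<open>g = E\<close> by simp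
      next
        case False
        then obtain s where "s < k+2" "F s = h" using inI hn by blast
        then show ?thesis using that[of s] memF by auto
      qed
      have barh: "bC \<le> bar_val vC (A h)"
        using bar_ge[OF finA hA s(1) _ vCnn] s(2) vb by simp
      define X where "X = (if h = 0 then 1 else (0::nat))"
      have Xn: "X < n" and Xh: "X \<noteq> h" unfolding X_def using kn by auto
      have "A X \<subseteq> {..<L} - {2*k+4}" using sub1[of X] memA Xh unfolding h_def by auto
      hence "bundle_val vC (A X) \<le> (\<Sum>t\<in>{..<L} - {2*k+4}. val_at vC t)"
        by (intro bundle_le vCnn) auto
      also have "\<dots> = 1 - bC"
        using tot sum.remove[of "{..<L}" "2*k+4" "val_at vC"] vb L_def by simp
      also have "\<dots> < a * bC" by (rule c2)
      also have "\<dots> \<le> a * bar_val vC (A h)" using barh assms(2) by simp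
      finally have "\<not> a_EFX n a vC A" by (rule not_efx[OF Xn hn])
      then show ?thesis unfolding A_def using lenC normC kC errCC by blast
    next
      case False
      then obtain s where s: "s < k+2" "F s = g" using inI gn by blast
      have sA: "s \<in> A g" using memF s by auto
      have barg: "m \<le> bar_val vC (A g)"
        using bar_ge[OF finA gA sA _ vCnn] s(1) vm by simp
      have "\<exists>X\<in>{0::nat,1,2}. X \<noteq> g \<and> X \<noteq> h" by auto
      then obtain X where X: "X \<in> {0::nat,1,2}" "X \<noteq> g" "X \<noteq> h" by blast
      have Xn: "X < n" using X(1) kn by auto
      have "A X \<subseteq> {..<L} - {k+3} - {2*k+4}" using sub1[of X] memA X unfolding h_def g_def by auto
      hence "bundle_val vC (A X) \<le> (\<Sum>t\<in>{..<L} - {k+3} - {2*k+4}. val_at vC t)"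
        by (intro bundle_le vCnn) auto
      also have "\<dots> = 1 - m - bC"
      proof -
        have "(\<Sum>t\<in>{..<L}. val_at vC t) = val_at vC (k+3) + (\<Sum>t\<in>{..<L} - {k+3}. val_at vC t)"
          by (rule sum.remove) (auto simp: L_def)
        moreover have "(\<Sum>t\<in>{..<L} - {k+3}. val_at vC t) = val_at vC (2*k+4) + (\<Sum>t\<in>{..<L} - {k+3} - {2*k+4}. val_at vC t)"
          by (rule sum.remove) (auto simp: L_def)
        ultimately show ?thesis using tot vm vb by simp
      qed
      also have "\<dots> = real (2*k+3) * \<epsilon>" unfolding bC_def by simp
      also have "\<dots> < a * m" by (rule c1)
      also have "\<dots> \<le> a * bar_val vC (A g)" using barg assms(2) by simp
      finally have "\<not> a_EFX n a vC A" by (rule not_efx[OF Xn gn])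
      then show ?thesis unfolding A_def using lenC normC kC errCC by blast
    qed
  qed
qed

end
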